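(* Let $a>0$, $0<\alpha<1$, let $m$ be the fixed positive integer of the standing setting, let $0<h\le a$ and let $g\in\mathcal C^m[0,h]$. Define $w(x):=\int_0^x(x-t)^{\alpha-1}g(t)\,dt$ for $0\le x\le h$. Then $w\in\mathcal C^{m,\alpha}[0,h]$ and \[ \|w'\|_{C^{m-1}[0,h]}\le Ch^\alpha\|g'\|_{C^{m-1}[0,h]},\qquad |w^{(m)}|_{C^{0,\alpha}[0,h]}\le C\|g^{(m)}\|_{C[0,h]}, \] where $C$ is a positive constant depending only on the standing data $\alpha$, $a$ and $M$ (in particular not on $h$ or $g$).
   Context: Standing setting: $a,b,M>0$, $0<\alpha<1$, $n$ a positive integer, $m:=\max\{j\in\mathbb N: j<n\alpha\}$, assumed $\ge1$. For integer $k\ge0$ and $0\le\gamma\le1$: $C^k[0,h]$ is the space of $k$ times continuously differentiable functions on $[0,h]$ with norm $\|v\|_{C^k[0,h]}=\max_{0\le j\le k}\max_{[0,h]}|v^{(j)}|$; $|v|_{C^{k,\gamma}[0,h]}:=\sup_{0\le x<y\le h}|v^{(k)}(x)-v^{(k)}(y)|/(y-x)^\gamma$; $C^{k,\gamma}[0,h]$ is the set of $v\in C^k[0,h]$ with finite seminorm, normed by $\max\{\|v\|_{C^k},|v|_{C^{k,\gamma}}\}$; $\mathcal C^{k,\gamma}[0,h]:=\{v\in C^{k,\gamma}[0,h]: v^{(j)}(0)=0,\ j=0,\dots,k\}$ and $\mathcal C^k[0,h]:=\mathcal C^{k,0}[0,h]$. *)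

theory Defs
  imports "HOL-Analysis.Analysis"
begin

definition mexp :: "nat \<Rightarrow> real \<Rightarrow> nat" where
  "mexp n \<alpha> = (GREATEST j::nat. real j < real n * \<alpha>)"

fun hderiv :: "nat \<Rightarrow> real set \<Rightarrow> (real \<Rightarrow> real) \<Rightarrow> real \<Rightarrow> real" where
  "hderiv 0 S f = f"
| "hderiv (Suc k) S f = (\<lambda>x. vector_derivative (hderiv k S f) (at x within S))"

definition Ck :: "nat \<Rightarrow> real \<Rightarrow> (real \<Rightarrow> real) \<Rightarrow> bool" where
  "Ck k h v \<longleftrightarrow>
     (\<forall>j<k. \<forall>x\<in>{0..h}.
        (hderiv j {0..h} v has_real_derivative hderiv (Suc j) {0..h} v x) (at x within {0..h})) \<and>
     (\<forall>j\<le>k. continuous_on {0..h} (hderiv j {0..h} v))"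

definition Ck_norm :: "nat \<Rightarrow> real \<Rightarrow> (real \<Rightarrow> real) \<Rightarrow> real" where
  "Ck_norm k h v = Max ((\<lambda>j. SUP x\<in>{0..h}. \<bar>hderiv j {0..h} v x\<bar>) ` {0..k})"

definition holder_quots :: "nat \<Rightarrow> real \<Rightarrow> real \<Rightarrow> (real \<Rightarrow> real) \<Rightarrow> real set" where
  "holder_quots k \<gamma> h v =
     (\<lambda>(x,y). \<bar>hderiv k {0..h} v x - hderiv k {0..h} v y\<bar> / (y - x) powr \<gamma>)
       ` {(x,y). 0 \<le> x \<and> x < y \<and> y \<le> h}"

definition holder_semi :: "nat \<Rightarrow> real \<Rightarrow> real \<Rightarrow> (real \<Rightarrow> real) \<Rightarrow> real" where
  "holder_semi k \<gamma> h v = Sup (holder_quots k \<gamma> h v)"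

definition Ckg :: "nat \<Rightarrow> real \<Rightarrow> real \<Rightarrow> (real \<Rightarrow> real) \<Rightarrow> bool" where
  "Ckg k \<gamma> h v \<longleftrightarrow> Ck k h v \<and> bdd_above (holder_quots k \<gamma> h v)"

text \<open>Calligraphic C^{k,gamma}[0,h]: additionally v^(j)(0) = 0 for j = 0..k.\<close>
definition cCkg :: "nat \<Rightarrow> real \<Rightarrow> real \<Rightarrow> (real \<Rightarrow> real) \<Rightarrow> bool" where
  "cCkg k \<gamma> h v \<longleftrightarrow> Ckg k \<gamma> h v \<and> (\<forall>j\<le>k. hderiv j {0..h} v 0 = 0)"

definition cCk :: "nat \<Rightarrow> real \<Rightarrow> (real \<Rightarrow> real) \<Rightarrow> bool" where
  "cCk k h v \<longleftrightarrow> cCkg k 0 h v"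

end

theory Submission
  imports Defs
begin

definition ext0 :: "(real\<Rightarrow>real) \<Rightarrow> real \<Rightarrow> real" where
  "ext0 F t = (if t \<le> 0 then 0 else F t)"

definition QQ :: "real \<Rightarrow> real \<Rightarrow> (real\<Rightarrow>real) \<Rightarrow> real \<Rightarrow> real" where
  "QQ \<alpha> h F x = integral {0..h} (\<lambda>s. s powr (\<alpha>-1) * F (x - s))"

definition UD :: "real set \<Rightarrow> (real\<Rightarrow>real) \<Rightarrow> (real\<Rightarrow>real) \<Rightarrow> bool" where
  "UD A F F' \<longleftrightarrow> (\<forall>e>0. \<exists>d>0. \<forall>u\<in>A. \<forall>v\<in>A. \<bar>v-u\<bar> < d \<longrightarrow> \<bar>F v - F u - F' u * (v-u)\<bar> \<le> e*\<bar>v-u\<bar>)"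

lemma kern_int:
  fixes h \<alpha> :: real
  assumes "0 < \<alpha>" "h \<ge> 0"
  shows "((\<lambda>s::real. s powr (\<alpha>-1)) has_integral h powr \<alpha> / \<alpha>) {0..h}"
  using has_integral_powr_from_0[of "\<alpha>-1" h] assms by simp

lemma kern_absint:
  fixes h \<alpha> :: real
  assumes "0 < \<alpha>" "h \<ge> 0"
  shows "(\<lambda>s::real. s powr (\<alpha>-1)) absolutely_integrable_on {0..h}"
  using kern_int[OF assms] by (intro nonnegative_absolutely_integrable_1) (auto simp: has_integral_integrable)

lemma prod_int:
  fixes F :: "real \<Rightarrow> real" and h x \<alpha> :: real
  assumes "0 < \<alpha>" "h \<ge> 0" "continuous_on {-h..h} F" "x \<in> {0..h}"
  shows "(\<lambda>s. s powr (\<alpha>-1) * F (x - s)) integrable_on {0..h}"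
proof -
  have c: "continuous_on {0..h} (\<lambda>s. F (x - s))"
  proof (rule continuous_on_compose2[OF assms(3)])
    show "continuous_on {0..h} (\<lambda>s. x - s)" by (intro continuous_intros)
    show "(\<lambda>s. x - s) ` {0..h} \<subseteq> {-h..h}" using assms(4) by (auto simp: image_def)
  qed
  have S: "{0..h} \<in> sets lebesgue" by (meson fmeasurableD lmeasurable_interval(1))
  have m: "(\<lambda>s. F (x - s)) \<in> borel_measurable (lebesgue_on {0..h})"
    by (rule continuous_imp_measurable_on_sets_lebesgue[OF c S])
  have b: "bounded ((\<lambda>s. F (x - s)) ` {0..h})"
    by (rule compact_imp_bounded, rule compact_continuous_image[OF c], simp)
  have "(\<lambda>s. F (x - s) * s powr (\<alpha>-1)) absolutely_integrable_on {0..h}"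
    by (rule absolutely_integrable_bounded_measurable_product_real[OF m S b kern_absint[OF assms(1,2)]])
  then have "(\<lambda>s. F (x - s) * s powr (\<alpha>-1)) integrable_on {0..h}"
    using set_lebesgue_integral_eq_integral(1) by blast
  then show ?thesis by (simp add: mult.commute)
qed

lemma prod_bound:
  fixes F :: "real \<Rightarrow> real" and h x \<alpha> B :: real
  assumes "0 < \<alpha>" "h \<ge> 0" "continuous_on {-h..h} F" "x \<in> {0..h}"
    and B: "\<And>t. t \<in> {-h..h} \<Longrightarrow> \<bar>F t\<bar> \<le> B"
  shows "\<bar>QQ \<alpha> h F x\<bar> \<le> B * (h powr \<alpha> / \<alpha>)"
proof -
  have "norm (integral {0..h} (\<lambda>s. s powr (\<alpha>-1) * F (x - s))) \<le> integral {0..h} (\<lambda>s. B * s powr (\<alpha>-1))"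
  proof (rule integral_norm_bound_integral)
    show "(\<lambda>s. s powr (\<alpha>-1) * F (x - s)) integrable_on {0..h}" by (rule prod_int[OF assms(1-4)])
    show "(\<lambda>s. B * s powr (\<alpha>-1)) integrable_on {0..h}"
      using integrable_cmul[OF has_integral_integrable[OF kern_int[OF assms(1,2)]], of B] by simp
    fix s assume s: "s \<in> {0..h}"
    have "\<bar>F (x - s)\<bar> \<le> B" using B s assms(4) by auto
    then show "norm (s powr (\<alpha>-1) * F (x - s)) \<le> B * s powr (\<alpha>-1)"
      by (simp add: abs_mult mult.commute mult_right_mono)
  qed
  also have "\<dots> = B * (h powr \<alpha> / \<alpha>)"
    using integral_unique[OF kern_int[OF assms(1,2)]] by simp
  finally show ?thesis by (simp add: QQ_def)
qed

lemma QQ_deriv: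
  fixes F F' :: "real \<Rightarrow> real" and h x \<alpha> :: real
  assumes a: "0 < \<alpha>" and h: "0 < h" and cF: "continuous_on {-h..h} F"
    and cF': "continuous_on {-h..h} F'" and ud: "UD {-h..h} F F'" and x: "x \<in> {0..h}"
  shows "(QQ \<alpha> h F has_real_derivative QQ \<alpha> h F' x) (at x within {0..h})"
  unfolding has_field_derivative_def has_derivative_within_alt
proof (intro conjI allI impI)
  show "bounded_linear ((*) (QQ \<alpha> h F' x))" by (rule bounded_linear_mult_right)
  fix e :: real assume e: "e > 0"
  define K where "K = h powr \<alpha> / \<alpha>"
  have K: "K > 0" using a h by (simp add: K_def)
  obtain d where d: "d > 0" and dd: "\<And>u v. u \<in> {-h..h} \<Longrightarrow> v \<in> {-h..h} \<Longrightarrow> \<bar>v-u\<bar> < d \<Longrightarrow>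
      \<bar>F v - F u - F' u * (v-u)\<bar> \<le> (e/K)*\<bar>v-u\<bar>"
  proof -
    have "e/K > 0" using e K by simp
    from ud[unfolded UD_def, rule_format, OF this] obtain d where "d > 0" and
      "\<forall>u\<in>{-h..h}. \<forall>v\<in>{-h..h}. \<bar>v-u\<bar> < d \<longrightarrow> \<bar>F v - F u - F' u * (v-u)\<bar> \<le> (e/K)*\<bar>v-u\<bar>" by blast
    then show ?thesis using that by blast
  qed
  show "\<exists>d>0. \<forall>y\<in>{0..h}. norm (y - x) < d \<longrightarrow>
      norm (QQ \<alpha> h F y - QQ \<alpha> h F x - QQ \<alpha> h F' x * (y - x)) \<le> e * norm (y - x)"
  proof (intro exI[of _ d] conjI ballI impI d)
    fix y assume y: "y \<in> {0..h}" and yd: "norm (y - x) < d"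
    let ?k = "\<lambda>s::real. s powr (\<alpha>-1)"
    have i1: "(\<lambda>s. ?k s * F (y - s)) integrable_on {0..h}" using prod_int[OF a _ cF y] h by simp
    have i2: "(\<lambda>s. ?k s * F (x - s)) integrable_on {0..h}" using prod_int[OF a _ cF x] h by simp
    have i3: "(\<lambda>s. ?k s * F' (x - s)) integrable_on {0..h}" using prod_int[OF a _ cF' x] h by simp
    have eq: "QQ \<alpha> h F y - QQ \<alpha> h F x - QQ \<alpha> h F' x * (y - x)
       = integral {0..h} (\<lambda>s. ?k s * (F (y - s) - F (x - s) - F' (x - s) * (y - x)))"
    proof -
      have "integral {0..h} (\<lambda>s. ?k s * (F (y - s) - F (x - s) - F' (x - s) * (y - x)))
          = integral {0..h} (\<lambda>s. (?k s * F (y - s) - ?k s * F (x - s)) - ?k s * F' (x - s) * (y - x))"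
        by (simp add: algebra_simps)
      also have "\<dots> = integral {0..h} (\<lambda>s. ?k s * F (y - s) - ?k s * F (x - s)) - integral {0..h} (\<lambda>s. ?k s * F' (x - s) * (y - x))"
        by (rule integral_diff) (auto intro!: integrable_diff i1 i2 integrable_on_mult_left i3)
      also have "\<dots> = QQ \<alpha> h F y - QQ \<alpha> h F x - QQ \<alpha> h F' x * (y - x)"
        by (simp add: QQ_def integral_diff[OF i1 i2] integral_mult_left)
      finally show ?thesis by simp
    qed
    have "norm (integral {0..h} (\<lambda>s. ?k s * (F (y - s) - F (x - s) - F' (x - s) * (y - x))))
        \<le> integral {0..h} (\<lambda>s. (e/K)*\<bar>y-x\<bar> * ?k s)"
    proof (rule integral_norm_bound_integral)
      have "(\<lambda>s. (?k s * F (y - s) - ?k s * F (x - s)) - ?k s * F' (x - s) * (y - x)) integrable_on {0..h}"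
        by (auto intro!: integrable_diff i1 i2 integrable_on_mult_left i3)
      then show "(\<lambda>s. ?k s * (F (y - s) - F (x - s) - F' (x - s) * (y - x))) integrable_on {0..h}"
        by (simp add: algebra_simps)
      show "(\<lambda>s. (e/K)*\<bar>y-x\<bar> * ?k s) integrable_on {0..h}"
        using integrable_cmul[OF has_integral_integrable[OF kern_int[OF a, of h]], of "(e/K)*\<bar>y-x\<bar>"] h by simp
      fix s assume s: "s \<in> {0..h}"
      have "\<bar>F (y - s) - F (x - s) - F' (x - s) * ((y - s) - (x - s))\<bar> \<le> (e/K)*\<bar>(y - s) - (x - s)\<bar>"
        by (rule dd) (use s x y yd in auto)
      then have hb: "\<bar>F (y - s) - F (x - s) - F' (x - s) * (y - x)\<bar> \<le> (e/K)*\<bar>y-x\<bar>" by simp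
      show "norm (?k s * (F (y - s) - F (x - s) - F' (x - s) * (y - x))) \<le> (e/K)*\<bar>y-x\<bar> * ?k s"
      proof -
        have "norm (?k s * (F (y - s) - F (x - s) - F' (x - s) * (y - x))) = ?k s * \<bar>F (y - s) - F (x - s) - F' (x - s) * (y - x)\<bar>"
          by (simp add: abs_mult)
        also have "\<dots> \<le> ?k s * ((e/K)*\<bar>y-x\<bar>)" by (rule mult_left_mono[OF hb]) simp
        finally show ?thesis by (simp add: mult.commute)
      qed
    qed
    also have "\<dots> = (e/K)*\<bar>y-x\<bar> * K"
      using integral_unique[OF kern_int[OF a, of h]] h by (simp add: K_def)
    also have "\<dots> = e * norm (y - x)" using K by simp
    finally show "norm (QQ \<alpha> h F y - QQ \<alpha> h F x - QQ \<alpha> h F' x * (y - x)) \<le> e * norm (y - x)"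
      using eq by simp
  qed
qed

lemma UD_of_deriv:
  fixes G G' :: "real \<Rightarrow> real" and h :: real
  assumes d: "\<And>x. x \<in> {0..h} \<Longrightarrow> (G has_real_derivative G' x) (at x within {0..h})"
    and c: "continuous_on {0..h} G'"
  shows "UD {0..h} G G'"
  unfolding UD_def
proof (intro allI impI)
  fix e :: real assume e: "e > 0"
  have "uniformly_continuous_on {0..h} G'" by (rule compact_uniformly_continuous[OF c]) simp
  then obtain d where d0: "d > 0" and dd: "\<And>x x'. x \<in> {0..h} \<Longrightarrow> x' \<in> {0..h} \<Longrightarrow> dist x' x < d \<Longrightarrow> dist (G' x') (G' x) < e"
    unfolding uniformly_continuous_on_def using e by metis
  show "\<exists>d>0. \<forall>u\<in>{0..h}. \<forall>v\<in>{0..h}. \<bar>v - u\<bar> < d \<longrightarrow> \<bar>G v - G u - G' u * (v - u)\<bar> \<le> e * \<bar>v - u\<bar>"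
  proof (intro exI[of _ d] conjI ballI impI d0)
    fix u v assume u: "u \<in> {0..h}" and v: "v \<in> {0..h}" and uv: "\<bar>v - u\<bar> < d"
    define T where "T = {min u v..max u v}"
    have T: "T \<subseteq> {0..h}" using u v unfolding T_def by auto
    have "norm ((\<lambda>t. G t - G' u * t) v - (\<lambda>t. G t - G' u * t) u) \<le> e * norm (v - u)"
    proof (rule field_differentiable_bound[of T])
      show "convex T" by (simp add: T_def)
      fix z assume z: "z \<in> T"
      have zin: "z \<in> {0..h}" using z T by blast
      show "((\<lambda>t. G t - G' u * t) has_field_derivative G' z - G' u) (at z within T)"
        by (rule derivative_eq_intros DERIV_subset[OF d[OF zin] T] | simp)+
      have "\<bar>z - u\<bar> \<le> \<bar>v - u\<bar>" using z unfolding T_def by (auto simp: abs_if min_def max_def split: if_splits)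
      then show "norm (G' z - G' u) \<le> e" using dd[OF u zin] uv by (simp add: dist_real_def)
    qed (auto simp: T_def)
    then show "\<bar>G v - G u - G' u * (v - u)\<bar> \<le> e * \<bar>v - u\<bar>" by (simp add: algebra_simps)
  qed
qed

lemma UD_ext:
  fixes G G' :: "real \<Rightarrow> real" and h :: real
  assumes ud: "UD {0..h} G G'" and g0: "G 0 = 0" and g'0: "G' 0 = 0" and h: "h \<ge> 0"
  shows "UD {-h..h} (ext0 G) (ext0 G')"
  unfolding UD_def
proof (intro allI impI)
  fix e :: real assume e: "e > 0"
  then have "e/2 > 0" by simp
  from ud[unfolded UD_def, rule_format, OF this] obtain d where d0: "d > 0" and
    dd: "\<And>u v. u\<in>{0..h} \<Longrightarrow> v\<in>{0..h} \<Longrightarrow> \<bar>v-u\<bar> < d \<Longrightarrow> \<bar>G v - G u - G' u * (v-u)\<bar> \<le> (e/2)*\<bar>v-u\<bar>" by blast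
  show "\<exists>d>0. \<forall>u\<in>{-h..h}. \<forall>v\<in>{-h..h}. \<bar>v - u\<bar> < d \<longrightarrow> \<bar>ext0 G v - ext0 G u - ext0 G' u * (v - u)\<bar> \<le> e * \<bar>v - u\<bar>"
  proof (intro exI[of _ d] conjI ballI impI d0)
    fix u v assume u: "u \<in> {-h..h}" and v: "v \<in> {-h..h}" and uv: "\<bar>v - u\<bar> < d"
    show "\<bar>ext0 G v - ext0 G u - ext0 G' u * (v - u)\<bar> \<le> e * \<bar>v - u\<bar>"
    proof (cases "u \<le> 0")
      case True
      show ?thesis
      proof (cases "v \<le> 0")
        case True
        then show ?thesis using \<open>u \<le> 0\<close> e by (simp add: ext0_def)
      next
        case False
        have "\<bar>G v - G 0 - G' 0 * (v-0)\<bar> \<le> (e/2)*\<bar>v-0\<bar>"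
          by (rule dd) (use False True u v uv in auto)
        then have "\<bar>G v\<bar> \<le> (e/2)*\<bar>v\<bar>" by (simp add: g0 g'0)
        moreover have "\<bar>v\<bar> \<le> \<bar>v - u\<bar>" using False True by auto
        ultimately have "\<bar>G v\<bar> \<le> e*\<bar>v - u\<bar>" using e
        proof -
          assume A: "\<bar>G v\<bar> \<le> (e/2)*\<bar>v\<bar>" "\<bar>v\<bar> \<le> \<bar>v - u\<bar>"
          have "e*\<bar>v\<bar> \<le> e*\<bar>v - u\<bar>" using A(2) e by (intro mult_left_mono) auto
          moreover have "(e/2)*\<bar>v\<bar> \<le> e*\<bar>v\<bar>" using e by (simp add: mult_right_mono)
          ultimately show ?thesis using A(1) by linarith
        qed
        then show ?thesis using False True by (simp add: ext0_def)
      qed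
    next
      case uF: False
      show ?thesis
      proof (cases "v \<le> 0")
        case False
        have "\<bar>G v - G u - G' u * (v-u)\<bar> \<le> (e/2)*\<bar>v-u\<bar>"
          by (rule dd) (use False uF u v uv in auto)
        moreover have "(e/2)*\<bar>v-u\<bar> \<le> e*\<bar>v-u\<bar>" using e by (simp add: mult_right_mono)
        ultimately have "\<bar>G v - G u - G' u * (v-u)\<bar> \<le> e*\<bar>v-u\<bar>" by linarith
        then show ?thesis using False uF by (simp add: ext0_def)
      next
        case True
        have a1: "\<bar>G 0 - G u - G' u * (0-u)\<bar> \<le> (e/2)*\<bar>0-u\<bar>"
          by (rule dd) (use True uF u v uv in auto)
        have a2: "\<bar>G u - G 0 - G' 0 * (u-0)\<bar> \<le> (e/2)*\<bar>u-0\<bar>"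
          by (rule dd) (use True uF u v uv in auto)
        have b1: "\<bar>G' u * u - G u\<bar> \<le> (e/2)*u" using a1 uF by (simp add: g0)
        have b2: "\<bar>G u\<bar> \<le> (e/2)*u" using a2 uF by (simp add: g0 g'0)
        have "\<bar>G' u * u\<bar> = \<bar>(G' u * u - G u) + G u\<bar>" by simp
        also have "\<dots> \<le> \<bar>G' u * u - G u\<bar> + \<bar>G u\<bar>" by (rule abs_triangle_ineq)
        also have "\<dots> \<le> e * u" using b1 b2 by linarith
        finally have "\<bar>G' u * u\<bar> \<le> e * u" .
        then have "\<bar>G' u\<bar> * u \<le> e * u" using uF by (simp add: abs_mult)
        then have b3: "\<bar>G' u\<bar> \<le> e" using uF by simp
        have "\<bar>G' u * v\<bar> \<le> e * \<bar>v\<bar>" using b3 by (simp add: abs_mult mult_right_mono)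
        note b4 = this
        have "\<bar>0 - G u - G' u * (v - u)\<bar> = \<bar>(G' u * u - G u) - G' u * v\<bar>" by (simp add: algebra_simps)
        also have "\<dots> \<le> \<bar>G' u * u - G u\<bar> + \<bar>G' u * v\<bar>" by (rule abs_triangle_ineq4)
        also have "\<dots> \<le> (e/2)*u + e*\<bar>v\<bar>" using b1 b4 by linarith
        finally have "\<bar>0 - G u - G' u * (v - u)\<bar> \<le> (e/2)*u + e*\<bar>v\<bar>" .
        also have "\<dots> \<le> e * \<bar>v - u\<bar>" using True uF e by (simp add: abs_if algebra_simps)
        finally show ?thesis using True uF by (simp add: ext0_def)
      qed
    qed
  qed
qed

lemma cont_ext:
  fixes G :: "real \<Rightarrow> real" and h :: real
  assumes c: "continuous_on {0..h} G" and g0: "G 0 = 0"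
  shows "continuous_on {-h..h} (ext0 G)"
proof -
  have "continuous_on {-h..h} (\<lambda>t. if t \<le> 0 then 0 else G t)"
  proof (rule continuous_on_cases_le)
    show "continuous_on {t \<in> {-h..h}. t \<le> 0} (\<lambda>t. 0::real)" by simp
    show "continuous_on {t \<in> {-h..h}. 0 \<le> t} G" by (rule continuous_on_subset[OF c]) auto
  qed (auto simp: g0 intro: continuous_intros)
  then show ?thesis by (simp add: ext0_def[abs_def])
qed

lemma refl_has_int:
  fixes \<phi> :: "real \<Rightarrow> real" and x :: real
  assumes "(\<phi> has_integral i) {0..x}"
  shows "((\<lambda>t. \<phi> (x - t)) has_integral i) {0..x}"
proof -
  have im: "(\<lambda>y. (1 / (-1::real)) *\<^sub>R y + - ((1 / (-1)) *\<^sub>R x)) ` {0..x} = {0..x}"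
  proof
    show "(\<lambda>y. (1 / (-1::real)) *\<^sub>R y + - ((1 / (-1)) *\<^sub>R x)) ` {0..x} \<subseteq> {0..x}" by auto
    show "{0..x} \<subseteq> (\<lambda>y. (1 / (-1::real)) *\<^sub>R y + - ((1 / (-1)) *\<^sub>R x)) ` {0..x}"
    proof
      fix z assume z: "z \<in> {0..x}"
      have "z = (\<lambda>y. (1 / (-1::real)) *\<^sub>R y + - ((1 / (-1)) *\<^sub>R x)) (x - z)" by simp
      moreover have "x - z \<in> {0..x}" using z by auto
      ultimately show "z \<in> (\<lambda>y. (1 / (-1::real)) *\<^sub>R y + - ((1 / (-1)) *\<^sub>R x)) ` {0..x}" by (rule image_eqI)
    qed
  qed
  have "((\<lambda>t. \<phi> ((-1) *\<^sub>R t + x)) has_integral (1 / (\<bar>-1\<bar> ^ DIM(real))) *\<^sub>R i)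
      ((\<lambda>y. (1 / (-1::real)) *\<^sub>R y + - ((1 / (-1)) *\<^sub>R x)) ` cbox 0 x)"
    by (rule has_integral_affinity) (use assms in auto)
  then show ?thesis using im by simp
qed

lemma refl_int:
  fixes \<phi> :: "real \<Rightarrow> real" and x :: real
  shows "integral {0..x} (\<lambda>t. \<phi> (x - t)) = integral {0..x} \<phi>"
proof (cases "\<phi> integrable_on {0..x}")
  case True
  then show ?thesis using refl_has_int[OF integrable_integral[OF True]] by (simp add: integral_unique)
next
  case False
  have "\<not> (\<lambda>t. \<phi> (x - t)) integrable_on {0..x}"
  proof
    assume "(\<lambda>t. \<phi> (x - t)) integrable_on {0..x}"
    from refl_has_int[OF integrable_integral[OF this]] have "\<phi> integrable_on {0..x}" by (simp add: has_integral_integrable)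
    then show False using False by simp
  qed
  then show ?thesis using False by (simp add: not_integrable_integral)
qed

lemma conv:
  fixes f :: "real \<Rightarrow> real" and h x \<alpha> :: real
  assumes a: "0 < \<alpha>" and h: "0 \<le> h" and c: "continuous_on {0..h} f" and f0: "f 0 = 0" and x: "x \<in> {0..h}"
  shows "integral {0..x} (\<lambda>t. (x-t) powr (\<alpha>-1) * f t) = QQ \<alpha> h (ext0 f) x"
proof -
  let ?\<phi> = "\<lambda>s. s powr (\<alpha>-1) * ext0 f (x - s)"
  have int: "?\<phi> integrable_on {0..h}" by (rule prod_int[OF a h cont_ext[OF c f0] x])
  have "QQ \<alpha> h (ext0 f) x = integral {0..x} ?\<phi> + integral {x..h} ?\<phi>"
    unfolding QQ_def using Henstock_Kurzweil_Integration.integral_combine[where a=0 and c=x and b=h and f="?\<phi>"] x int by simp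
  also have "integral {x..h} ?\<phi> = 0"
    by (subst integral_cong[where g = "\<lambda>s. 0"]) (auto simp: ext0_def)
  also have "integral {0..x} ?\<phi> = integral {0..x} (\<lambda>s. s powr (\<alpha>-1) * f (x - s))"
  proof (rule integral_cong)
    fix s assume "s \<in> {0..x}"
    then show "?\<phi> s = s powr (\<alpha>-1) * f (x - s)"
      by (cases "x - s \<le> 0") (auto simp: ext0_def f0)
  qed
  also have "\<dots> = integral {0..x} (\<lambda>t. (\<lambda>s. s powr (\<alpha>-1) * f (x - s)) (x - t))"
    by (rule refl_int[symmetric])
  finally show ?thesis by simp
qed

lemma kint:
  fixes a b y \<alpha> :: real
  assumes al: "0 < \<alpha>" and ab: "a \<le> b" and hb: "b \<le> y"
  shows "((\<lambda>t. (y-t) powr (\<alpha>-1)) has_integral ((y-a) powr \<alpha> - (y-b) powr \<alpha>)/\<alpha>) {a..b}"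
proof -
  have "((\<lambda>t. (y-t) powr (\<alpha>-1)) has_integral ((\<lambda>t. -((y-t) powr \<alpha>)/\<alpha>) b - (\<lambda>t. -((y-t) powr \<alpha>)/\<alpha>) a)) {a..b}"
  proof (rule fundamental_theorem_of_calculus_interior_strong[where S="{}"])
    show "continuous_on {a..b} (\<lambda>t. -((y-t) powr \<alpha>)/\<alpha>)"
      by (intro continuous_intros continuous_on_powr') (use al hb in auto)
    fix t assume t: "t \<in> {a<..<b} - {}"
    then have yt: "y - t > 0" using hb by auto
    have "((\<lambda>t. -((y-t) powr \<alpha>)/\<alpha>) has_real_derivative (y-t) powr (\<alpha>-1)) (at t)"
      by (rule derivative_eq_intros refl | use yt al in simp)+
    then show "((\<lambda>t. -((y-t) powr \<alpha>)/\<alpha>) has_vector_derivative (y-t) powr (\<alpha>-1)) (at t)"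
      by (simp add: has_real_derivative_iff_has_vector_derivative)
  qed (use ab in auto)
  then show ?thesis by (simp add: diff_divide_distrib)
qed

lemma int_mult_cont:
  fixes k f :: "real \<Rightarrow> real" and a b I :: real
  assumes ki: "(k has_integral I) {a..b}" and kp: "\<And>t. t \<in> {a..b} \<Longrightarrow> k t \<ge> 0"
    and c: "continuous_on {a..b} f"
  shows "(\<lambda>t. k t * f t) integrable_on {a..b}"
proof -
  have S: "{a..b} \<in> sets lebesgue" by (meson fmeasurableD lmeasurable_interval(1))
  have m: "f \<in> borel_measurable (lebesgue_on {a..b})"
    by (rule continuous_imp_measurable_on_sets_lebesgue[OF c S])
  have bd: "bounded (f ` {a..b})"
    by (rule compact_imp_bounded, rule compact_continuous_image[OF c], simp)
  have ka: "k absolutely_integrable_on {a..b}"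
    using ki kp by (intro nonnegative_absolutely_integrable_1) (auto simp: has_integral_integrable)
  have "(\<lambda>t. f t * k t) absolutely_integrable_on {a..b}"
    by (rule absolutely_integrable_bounded_measurable_product_real[OF m S bd ka])
  then have "(\<lambda>t. f t * k t) integrable_on {a..b}"
    using set_lebesgue_integral_eq_integral(1) by blast
  then show ?thesis by (simp add: mult.commute)
qed

lemma holder:
  fixes f :: "real \<Rightarrow> real" and x y h \<alpha> B :: real
  assumes al: "0 < \<alpha>" "\<alpha> < 1" and c: "continuous_on {0..h} f"
    and fb: "\<And>t. t \<in> {0..h} \<Longrightarrow> \<bar>f t\<bar> \<le> B" and xy: "0 \<le> x" "x < y" "y \<le> h"
  shows "\<bar>integral {0..y} (\<lambda>t. (y-t) powr (\<alpha>-1) * f t) - integral {0..x} (\<lambda>t. (x-t) powr (\<alpha>-1) * f t)\<bar>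
          \<le> 2*B/\<alpha> * (y-x) powr \<alpha>"
proof -
  let ?ky = "\<lambda>t. (y-t) powr (\<alpha>-1)"
  let ?kx = "\<lambda>t. (x-t) powr (\<alpha>-1)"
  have B0: "B \<ge> 0" using fb[of 0] xy by force
  have cy: "continuous_on {0..y} f" by (rule continuous_on_subset[OF c]) (use xy in auto)
  have cx: "continuous_on {0..x} f" by (rule continuous_on_subset[OF c]) (use xy in auto)
  have cxy: "continuous_on {x..y} f" by (rule continuous_on_subset[OF c]) (use xy in auto)
  have Ky: "(?ky has_integral ((y-0) powr \<alpha> - (y-y) powr \<alpha>)/\<alpha>) {0..y}" by (rule kint) (use al xy in auto)
  have Kyx: "(?ky has_integral ((y-0) powr \<alpha> - (y-x) powr \<alpha>)/\<alpha>) {0..x}" by (rule kint) (use al xy in auto)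
  have Kxy: "(?ky has_integral ((y-x) powr \<alpha> - (y-y) powr \<alpha>)/\<alpha>) {x..y}" by (rule kint) (use al xy in auto)
  have Kx: "(?kx has_integral ((x-0) powr \<alpha> - (x-x) powr \<alpha>)/\<alpha>) {0..x}" by (rule kint) (use al xy in auto)
  have iy: "(\<lambda>t. ?ky t * f t) integrable_on {0..y}" by (rule int_mult_cont[OF Ky _ cy]) simp
  have iyx: "(\<lambda>t. ?ky t * f t) integrable_on {0..x}" by (rule int_mult_cont[OF Kyx _ cx]) simp
  have ixy: "(\<lambda>t. ?ky t * f t) integrable_on {x..y}" by (rule int_mult_cont[OF Kxy _ cxy]) simp
  have ix: "(\<lambda>t. ?kx t * f t) integrable_on {0..x}" by (rule int_mult_cont[OF Kx _ cx]) simp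
  have split: "integral {0..y} (\<lambda>t. ?ky t * f t) = integral {0..x} (\<lambda>t. ?ky t * f t) + integral {x..y} (\<lambda>t. ?ky t * f t)"
    using Henstock_Kurzweil_Integration.integral_combine[where a=0 and c=x and b=y and f="\<lambda>t. ?ky t * f t"] xy iy by simp
  define \<phi> where "\<phi> = (\<lambda>t. if t = x then 0 else (?ky t - ?kx t) * f t)"
  have d1: "integral {0..x} (\<lambda>t. ?ky t * f t) - integral {0..x} (\<lambda>t. ?kx t * f t) = integral {0..x} \<phi>"
  proof -
    have "integral {0..x} (\<lambda>t. ?ky t * f t) - integral {0..x} (\<lambda>t. ?kx t * f t)
        = integral {0..x} (\<lambda>t. ?ky t * f t - ?kx t * f t)" by (rule integral_diff[OF iyx ix, symmetric])
    also have "\<dots> = integral {0..x} \<phi>"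
      by (rule integral_spike[where S="{x}"]) (auto simp: \<phi>_def algebra_simps)
    finally show ?thesis .
  qed
  have phint: "\<phi> integrable_on {0..x}"
    by (rule integrable_spike[OF integrable_diff[OF iyx ix], where S="{x}"]) (auto simp: \<phi>_def algebra_simps)
  define g where "g = (\<lambda>t. if t = x then 0 else B * (?kx t - ?ky t))"
  have gi: "(g has_integral B * (x powr \<alpha>/\<alpha> - (y powr \<alpha> - (y-x) powr \<alpha>)/\<alpha>)) {0..x}"
  proof (rule has_integral_spike[where S="{x}"])
    show "((\<lambda>t. B * (?kx t - ?ky t)) has_integral B * (x powr \<alpha>/\<alpha> - (y powr \<alpha> - (y-x) powr \<alpha>)/\<alpha>)) {0..x}"
      using has_integral_mult_right[OF has_integral_diff[OF Kx Kyx], of B] by simp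
  qed (auto simp: g_def)
  have b1: "\<bar>integral {0..x} \<phi>\<bar> \<le> B * (x powr \<alpha>/\<alpha> - (y powr \<alpha> - (y-x) powr \<alpha>)/\<alpha>)"
  proof -
    have "norm (integral {0..x} \<phi>) \<le> integral {0..x} g"
    proof (rule integral_norm_bound_integral[OF phint])
      show "g integrable_on {0..x}" using gi by (rule has_integral_integrable)
      fix t assume t: "t \<in> {0..x}"
      show "norm (\<phi> t) \<le> g t"
      proof (cases "t = x")
        case True then show ?thesis by (simp add: \<phi>_def g_def)
      next
        case False
        then have tx: "t < x" using t by auto
        have le: "?ky t \<le> ?kx t" by (rule powr_mono2') (use al tx xy in auto)
        have ft: "\<bar>f t\<bar> \<le> B" using fb t xy by auto
        have "norm (\<phi> t) = (?kx t - ?ky t) * \<bar>f t\<bar>" using False le by (simp add: \<phi>_def abs_mult)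
        also have "\<dots> \<le> (?kx t - ?ky t) * B" by (rule mult_left_mono[OF ft]) (use le in simp)
        finally show ?thesis using False by (simp add: g_def mult.commute)
      qed
    qed
    then show ?thesis using integral_unique[OF gi] by simp
  qed
  have b2: "\<bar>integral {x..y} (\<lambda>t. ?ky t * f t)\<bar> \<le> B * ((y-x) powr \<alpha> / \<alpha>)"
  proof -
    have "norm (integral {x..y} (\<lambda>t. ?ky t * f t)) \<le> integral {x..y} (\<lambda>t. B * ?ky t)"
    proof (rule integral_norm_bound_integral[OF ixy])
      show "(\<lambda>t. B * ?ky t) integrable_on {x..y}"
        using has_integral_integrable[OF has_integral_mult_right[OF Kxy, of B]] .
      fix t assume t: "t \<in> {x..y}"
      have ft: "\<bar>f t\<bar> \<le> B" using fb t xy by auto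
      have "norm (?ky t * f t) = ?ky t * \<bar>f t\<bar>" by (simp add: abs_mult)
      also have "\<dots> \<le> ?ky t * B" by (rule mult_left_mono[OF ft]) simp
      finally show "norm (?ky t * f t) \<le> B * ?ky t" by (simp add: mult.commute)
    qed
    then show ?thesis using integral_unique[OF has_integral_mult_right[OF Kxy, of B]] by simp
  qed
  have xa: "x powr \<alpha> \<le> y powr \<alpha>" by (rule powr_mono2) (use al xy in auto)
  have "\<bar>integral {0..y} (\<lambda>t. ?ky t * f t) - integral {0..x} (\<lambda>t. ?kx t * f t)\<bar>
      = \<bar>integral {0..x} \<phi> + integral {x..y} (\<lambda>t. ?ky t * f t)\<bar>" using split d1 by simp
  also have "\<dots> \<le> \<bar>integral {0..x} \<phi>\<bar> + \<bar>integral {x..y} (\<lambda>t. ?ky t * f t)\<bar>" by (rule abs_triangle_ineq)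
  also have "\<dots> \<le> B * (x powr \<alpha>/\<alpha> - (y powr \<alpha> - (y-x) powr \<alpha>)/\<alpha>) + B * ((y-x) powr \<alpha> / \<alpha>)"
    using b1 b2 by linarith
  also have "\<dots> = B/\<alpha> * ((x powr \<alpha> - y powr \<alpha>) + 2 * (y-x) powr \<alpha>)" using al by (simp add: field_simps)
  also have "\<dots> \<le> B/\<alpha> * (2 * (y-x) powr \<alpha>)"
    by (rule mult_left_mono) (use xa B0 al in auto)
  also have "\<dots> = 2*B/\<alpha> * (y-x) powr \<alpha>" by simp
  finally show ?thesis .
qed

lemma vd_cong:
  assumes "\<And>y. y \<in> S \<Longrightarrow> f y = g y" "x \<in> S"
  shows "vector_derivative f (at x within S) = vector_derivative g (at x within S)"
proof -
  have "\<And>D. (f has_vector_derivative D) (at x within S) \<longleftrightarrow> (g has_vector_derivative D) (at x within S)"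
  proof
    fix D assume d: "(f has_vector_derivative D) (at x within S)"
    show "(g has_vector_derivative D) (at x within S)"
      by (rule has_vector_derivative_transform[OF assms(2) _ d]) (simp add: assms(1))
  next
    fix D assume d: "(g has_vector_derivative D) (at x within S)"
    show "(f has_vector_derivative D) (at x within S)"
      by (rule has_vector_derivative_transform[OF assms(2) _ d]) (simp add: assms(1))
  qed
  then show ?thesis unfolding vector_derivative_def by simp
qed

lemma hderiv_cong:
  assumes "\<And>y. y \<in> S \<Longrightarrow> f y = g y" "x \<in> S"
  shows "hderiv j S f x = hderiv j S g x"
  using assms(2)
proof (induction j arbitrary: x)
  case 0 then show ?case using assms(1) by simp
next
  case (Suc j)
  have "vector_derivative (hderiv j S f) (at x within S) = vector_derivative (hderiv j S g) (at x within S)"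
    by (rule vd_cong[OF Suc.IH Suc.prems])
  then show ?case by simp
qed

lemma hderiv_shift: "hderiv j S (hderiv 1 S f) = hderiv (Suc j) S f"
  by (induction j) simp_all

lemma holder_cont:
  fixes W :: "real \<Rightarrow> real" and S :: "real set" and K \<alpha> :: real
  assumes al: "\<alpha> > 0" and K: "K \<ge> 0"
    and hb: "\<And>x y. x \<in> S \<Longrightarrow> y \<in> S \<Longrightarrow> x < y \<Longrightarrow> \<bar>W y - W x\<bar> \<le> K * (y - x) powr \<alpha>"
  shows "continuous_on S W"
  unfolding continuous_on_iff
proof (intro ballI allI impI)
  fix x e assume x: "x \<in> S" and e: "(0::real) < e"
  define d where "d = (e/(K+1)) powr (1/\<alpha>)"
  have d: "d > 0" using e K by (simp add: d_def)
  have dpow: "d powr \<alpha> = e/(K+1)" using e K al by (simp add: d_def powr_powr)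
  show "\<exists>d>0. \<forall>x'\<in>S. dist x' x < d \<longrightarrow> dist (W x') (W x) < e"
  proof (intro exI[of _ d] conjI ballI impI d)
    fix x' assume x': "x' \<in> S" and dx: "dist x' x < d"
    have key: "\<bar>W x' - W x\<bar> \<le> K * \<bar>x' - x\<bar> powr \<alpha>"
    proof (cases x x' rule: linorder_cases)
      case less then show ?thesis using hb[OF x x' less] by simp
    next
      case equal then show ?thesis using K by simp
    next
      case greater then show ?thesis using hb[OF x' x greater] by (simp add: abs_minus_commute)
    qed
    have "\<bar>x' - x\<bar> powr \<alpha> \<le> d powr \<alpha>"
      using dx al by (intro powr_mono2) (auto simp: dist_real_def)
    then have "\<bar>x' - x\<bar> powr \<alpha> \<le> e/(K+1)" using dpow by simp
    then have "K * \<bar>x' - x\<bar> powr \<alpha> \<le> K * (e/(K+1))" using K by (intro mult_left_mono)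
    also have "\<dots> < e" using K e by (simp add: field_simps)
    finally show "dist (W x') (W x) < e" using key by (simp add: dist_real_def)
  qed
qed

theorem lemma4p4:
  fixes a b M \<alpha> :: real and n :: nat
  assumes "a > 0" "b > 0" "M > 0" "0 < \<alpha>" "\<alpha> < 1" "n > 0" "mexp n \<alpha> \<ge> 1"
  shows "\<exists>C>0. \<forall>h g. 0 < h \<longrightarrow> h \<le> a \<longrightarrow> cCk (mexp n \<alpha>) h g \<longrightarrow>
     (let w = (\<lambda>x. integral {0..x} (\<lambda>t. (x - t) powr (\<alpha> - 1) * g t)) in
        cCkg (mexp n \<alpha>) \<alpha> h w \<and>
        Ck_norm (mexp n \<alpha> - 1) h (hderiv 1 {0..h} w)
          \<le> C * h powr \<alpha> * Ck_norm (mexp n \<alpha> - 1) h (hderiv 1 {0..h} g) \<and>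
        holder_semi 0 \<alpha> h (hderiv (mexp n \<alpha>) {0..h} w)
          \<le> C * Ck_norm 0 h (hderiv (mexp n \<alpha>) {0..h} g))"
proof -
  define m where "m = mexp n \<alpha>"
  have m1: "m \<ge> 1" using assms(7) by (simp add: m_def)
  have al: "0 < \<alpha>" "\<alpha> < 1" using assms(4,5) by auto
  show ?thesis unfolding m_def[symmetric] Let_def
  proof (intro exI[of _ "2/\<alpha>"] conjI allI impI)
    show "2/\<alpha> > 0" using al by simp
    fix h :: real and g :: "real \<Rightarrow> real"
    assume h: "0 < h" and ha: "h \<le> a" and gC: "cCk m h g"
    define w where "w = (\<lambda>x. integral {0..x} (\<lambda>t. (x - t) powr (\<alpha> - 1) * g t))"
    define G where "G j = hderiv j {0..h} g" for j
    have G0: "G 0 = g" by (simp add: G_def)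
    have gd: "\<And>j x. j < m \<Longrightarrow> x \<in> {0..h} \<Longrightarrow> (G j has_real_derivative G (Suc j) x) (at x within {0..h})"
      using gC unfolding cCk_def cCkg_def Ckg_def Ck_def G_def by blast
    have gc: "\<And>j. j \<le> m \<Longrightarrow> continuous_on {0..h} (G j)"
      using gC unfolding cCk_def cCkg_def Ckg_def Ck_def G_def by blast
    have g0: "\<And>j. j \<le> m \<Longrightarrow> G j 0 = 0"
      using gC unfolding cCk_def cCkg_def Ckg_def Ck_def G_def by blast
    have dQ: "(QQ \<alpha> h (ext0 (G j)) has_real_derivative QQ \<alpha> h (ext0 (G (Suc j))) x) (at x within {0..h})"
      if j: "j < m" and x: "x \<in> {0..h}" for j x
    proof (rule QQ_deriv[OF al(1) h _ _ _ x])
      show "continuous_on {-h..h} (ext0 (G j))" using j by (intro cont_ext gc g0) auto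
      show "continuous_on {-h..h} (ext0 (G (Suc j)))" using j by (intro cont_ext gc g0) auto
      have "UD {0..h} (G j) (G (Suc j))" using j by (intro UD_of_deriv gd gc) auto
      then show "UD {-h..h} (ext0 (G j)) (ext0 (G (Suc j)))" using j h by (intro UD_ext g0) auto
    qed
    have W: "\<forall>x\<in>{0..h}. hderiv j {0..h} w x = QQ \<alpha> h (ext0 (G j)) x" if "j \<le> m" for j
      using that
    proof (induction j)
      case 0
      show ?case
      proof
        fix x assume x: "x \<in> {0..h}"
        have "hderiv 0 {0..h} w x = integral {0..x} (\<lambda>t. (x-t) powr (\<alpha>-1) * G 0 t)" by (simp add: w_def G0)
        also have "\<dots> = QQ \<alpha> h (ext0 (G 0)) x"
          by (rule conv[OF al(1) _ gc g0 x]) (use h in auto)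
        finally show "hderiv 0 {0..h} w x = QQ \<alpha> h (ext0 (G 0)) x" .
      qed
    next
      case (Suc j)
      then have j: "j < m" by simp
      show ?case
      proof
        fix x assume x: "x \<in> {0..h}"
        have "hderiv (Suc j) {0..h} w x = vector_derivative (hderiv j {0..h} w) (at x within {0..h})" by simp
        also have "\<dots> = vector_derivative (QQ \<alpha> h (ext0 (G j))) (at x within {0..h})"
          by (rule vd_cong) (use Suc.IH j x in auto)
        also have "\<dots> = QQ \<alpha> h (ext0 (G (Suc j))) x"
          using vector_derivative_within_cbox[of 0 h x "QQ \<alpha> h (ext0 (G j))"] dQ[OF j x] h x
          by (simp add: has_real_derivative_iff_has_vector_derivative)
        finally show "hderiv (Suc j) {0..h} w x = QQ \<alpha> h (ext0 (G (Suc j))) x" .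
      qed
    qed
    have PW: "hderiv j {0..h} w x = integral {0..x} (\<lambda>t. (x-t) powr (\<alpha>-1) * G j t)"
      if j: "j \<le> m" and x: "x \<in> {0..h}" for j x
      using W[OF j] x conv[OF al(1) _ gc[OF j] g0[OF j] x] h by simp
    define B where "B j = (SUP x\<in>{0..h}. \<bar>G j x\<bar>)" for j
    have bddB: "bdd_above ((\<lambda>x. \<bar>G j x\<bar>) ` {0..h})" if j: "j \<le> m" for j
    proof -
      have "continuous_on {0..h} (\<lambda>x. \<bar>G j x\<bar>)" using gc[OF j] by (intro continuous_intros)
      then have "bounded ((\<lambda>x. \<bar>G j x\<bar>) ` {0..h})" by (intro compact_imp_bounded compact_continuous_image) auto
      then show ?thesis by (rule bounded_imp_bdd_above)
    qed
    have Bge: "\<bar>G j x\<bar> \<le> B j" if j: "j \<le> m" and x: "x \<in> {0..h}" for j x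
      unfolding B_def by (rule cSUP_upper[OF x bddB[OF j]])
    have B0: "B j \<ge> 0" if j: "j \<le> m" for j
      using Bge[OF j, of 0] h by force
    have extb: "\<bar>ext0 (G j) t\<bar> \<le> B j" if j: "j \<le> m" and t: "t \<in> {-h..h}" for j t
      using Bge[OF j, of t] B0[OF j] t by (auto simp: ext0_def)
    have Hold: "\<bar>hderiv m {0..h} w y - hderiv m {0..h} w x\<bar> \<le> 2*B m/\<alpha> * (y-x) powr \<alpha>"
      if xy: "0 \<le> x" "x < y" "y \<le> h" for x y
      using PW[of m x] PW[of m y] xy holder[OF al gc[of m] _ xy, of "B m"] Bge[of m] by auto
    have Ckw: "Ck m h w"
      unfolding Ck_def
    proof (intro conjI allI impI ballI)
      fix j x assume j: "j < m" and x: "x \<in> {0..h}"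
      have "(QQ \<alpha> h (ext0 (G j)) has_derivative (*) (QQ \<alpha> h (ext0 (G (Suc j))) x)) (at x within {0..h})"
        using dQ[OF j x] by (simp add: has_field_derivative_def)
      then have "(hderiv j {0..h} w has_derivative (*) (QQ \<alpha> h (ext0 (G (Suc j))) x)) (at x within {0..h})"
        by (rule has_derivative_transform[OF x, rotated]) (use W[of j] j in auto)
      moreover have "hderiv (Suc j) {0..h} w x = QQ \<alpha> h (ext0 (G (Suc j))) x" using W[of "Suc j"] j x by auto
      ultimately show "(hderiv j {0..h} w has_real_derivative hderiv (Suc j) {0..h} w x) (at x within {0..h})"
        by (simp add: has_field_derivative_def)
    next
      fix j assume j: "j \<le> m"
      show "continuous_on {0..h} (hderiv j {0..h} w)"
      proof (cases "j < m")
        case True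
        show ?thesis unfolding continuous_on_eq_continuous_within
        proof
          fix x assume x: "x \<in> {0..h}"
          have "(QQ \<alpha> h (ext0 (G j)) has_derivative (*) (QQ \<alpha> h (ext0 (G (Suc j))) x)) (at x within {0..h})"
            using dQ[OF True x] by (simp add: has_field_derivative_def)
          then have "(hderiv j {0..h} w has_derivative (*) (QQ \<alpha> h (ext0 (G (Suc j))) x)) (at x within {0..h})"
            by (rule has_derivative_transform[OF x, rotated]) (use W[of j] j in auto)
          then show "continuous (at x within {0..h}) (hderiv j {0..h} w)"
            by (rule has_derivative_continuous)
        qed
      next
        case False
        then have jm: "j = m" using j by simp
        show ?thesis unfolding jm
          by (rule holder_cont[OF al(1), of "2*B m/\<alpha>"]) (use B0[of m] al Hold in auto)
      qed
    qed
    have bddH: "bdd_above (holder_quots m \<alpha> h w)"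
      unfolding holder_quots_def
    proof (rule bdd_aboveI[of _ "2*B m/\<alpha>"])
      fix q assume "q \<in> (\<lambda>(x, y). \<bar>hderiv m {0..h} w x - hderiv m {0..h} w y\<bar> / (y - x) powr \<alpha>) ` {(x, y). 0 \<le> x \<and> x < y \<and> y \<le> h}"
      then obtain x y where xy: "0 \<le> x" "x < y" "y \<le> h"
        and q: "q = \<bar>hderiv m {0..h} w x - hderiv m {0..h} w y\<bar> / (y - x) powr \<alpha>" by auto
      have "\<bar>hderiv m {0..h} w x - hderiv m {0..h} w y\<bar> \<le> 2*B m/\<alpha> * (y-x) powr \<alpha>"
        using Hold[OF xy] by (simp add: abs_minus_commute)
      then show "q \<le> 2*B m/\<alpha>" unfolding q using xy by (simp add: divide_le_eq)
    qed
    have zero: "hderiv j {0..h} w 0 = 0" if "j \<le> m" for j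
      using PW[OF that, of 0] h by simp
    show "cCkg m \<alpha> h (\<lambda>x. integral {0..x} (\<lambda>t. (x - t) powr (\<alpha> - 1) * g t))"
      unfolding w_def[symmetric] cCkg_def Ckg_def using Ckw bddH zero by blast
    have QB: "\<bar>QQ \<alpha> h (ext0 (G j)) x\<bar> \<le> B j * (h powr \<alpha> / \<alpha>)" if j: "j \<le> m" and x: "x \<in> {0..h}" for j x
      by (rule prod_bound[OF al(1) _ cont_ext[OF gc[OF j] g0[OF j]] x]) (use h extb[OF j] in auto)
    define N where "N = Ck_norm (m - 1) h (hderiv 1 {0..h} g)"
    have NB: "B (Suc j) \<le> N" if j: "j \<in> {0..m-1}" for j
    proof -
      have "B (Suc j) = (SUP x\<in>{0..h}. \<bar>hderiv j {0..h} (hderiv 1 {0..h} g) x\<bar>)"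
        by (simp only: B_def G_def hderiv_shift)
      also have "\<dots> \<le> N" unfolding N_def Ck_norm_def by (rule Max_ge) (use j in auto)
      finally show ?thesis .
    qed
    have N0: "N \<ge> 0" using NB[of 0] B0[of 1] m1 by force
    have "Ck_norm (m - 1) h (hderiv 1 {0..h} w) \<le> 2 / \<alpha> * h powr \<alpha> * N"
      unfolding Ck_norm_def
    proof (rule Max.boundedI)
      show "finite ((\<lambda>j. SUP x\<in>{0..h}. \<bar>hderiv j {0..h} (hderiv 1 {0..h} w) x\<bar>) ` {0..m - 1})" by simp
      show "(\<lambda>j. SUP x\<in>{0..h}. \<bar>hderiv j {0..h} (hderiv 1 {0..h} w) x\<bar>) ` {0..m - 1} \<noteq> {}" by simp
      fix q assume "q \<in> (\<lambda>j. SUP x\<in>{0..h}. \<bar>hderiv j {0..h} (hderiv 1 {0..h} w) x\<bar>) ` {0..m - 1}"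
      then obtain j where j: "j \<in> {0..m-1}" and q: "q = (SUP x\<in>{0..h}. \<bar>hderiv j {0..h} (hderiv 1 {0..h} w) x\<bar>)" by auto
      have jm: "Suc j \<le> m" using j m1 by auto
      have "q \<le> B (Suc j) * (h powr \<alpha> / \<alpha>)"
        unfolding q hderiv_shift
      proof (rule cSUP_least)
        show "{0..h} \<noteq> {}" using h by auto
        fix x assume x: "x \<in> {0..h}"
        show "\<bar>hderiv (Suc j) {0..h} w x\<bar> \<le> B (Suc j) * (h powr \<alpha> / \<alpha>)"
          using W[OF jm] x QB[OF jm x] by simp
      qed
      also have "\<dots> \<le> N * (h powr \<alpha> / \<alpha>)" by (rule mult_right_mono[OF NB[OF j]]) (use al in simp)
      also have "\<dots> \<le> 2 / \<alpha> * h powr \<alpha> * N" using N0 al by (simp add: field_simps)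
      finally show "q \<le> 2 / \<alpha> * h powr \<alpha> * N" .
    qed
    then show "Ck_norm (m - 1) h (hderiv 1 {0..h} (\<lambda>x. integral {0..x} (\<lambda>t. (x - t) powr (\<alpha> - 1) * g t)))
          \<le> 2 / \<alpha> * h powr \<alpha> * Ck_norm (m - 1) h (hderiv 1 {0..h} g)"
      by (simp only: w_def N_def)
    have CN0: "Ck_norm 0 h (hderiv m {0..h} g) = B m"
      by (simp add: Ck_norm_def B_def G_def)
    show "holder_semi 0 \<alpha> h (hderiv m {0..h} (\<lambda>x. integral {0..x} (\<lambda>t. (x - t) powr (\<alpha> - 1) * g t)))
          \<le> 2 / \<alpha> * Ck_norm 0 h (hderiv m {0..h} g)"
      unfolding w_def[symmetric] CN0 holder_semi_def
    proof (rule cSup_least)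
      show "holder_quots 0 \<alpha> h (hderiv m {0..h} w) \<noteq> {}" using h unfolding holder_quots_def by auto
      fix q assume "q \<in> holder_quots 0 \<alpha> h (hderiv m {0..h} w)"
      then obtain x y where xy: "0 \<le> x" "x < y" "y \<le> h"
        and q: "q = \<bar>hderiv m {0..h} w x - hderiv m {0..h} w y\<bar> / (y - x) powr \<alpha>"
        unfolding holder_quots_def by auto
      have "\<bar>hderiv m {0..h} w x - hderiv m {0..h} w y\<bar> \<le> 2*B m/\<alpha> * (y-x) powr \<alpha>"
        using Hold[OF xy] by (simp add: abs_minus_commute)
      then show "q \<le> 2 / \<alpha> * B m" unfolding q using xy by (simp add: divide_le_eq)
    qed
  qed
qed

end
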